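(* Given $a,b\in\ell_\infty$, there is a continuous symmetric bilinear form $B$ on $\ell_1$ such that for every $z_1\in\ell_1''$ and every $z_2\in c_0^\perp\subseteq\ell_1''$, $$\tilde B(z_1,z_2)=z_1(a)\,z_2(b).$$
   Context: $\ell_1''=\ell_\infty'$, and $c_0^\perp\subseteq\ell_1''$ is the annihilator of $c_0\subseteq\ell_\infty$; one has $\ell_1''=\ell_1\oplus c_0^\perp$. For a continuous bilinear form $B$ on $\ell_1$, its canonical (Aron–Berner) extension is $\tilde B(z_1,z_2)=\lim_{\alpha}\lim_{\beta}B(x_\alpha,y_\beta)$, where $(x_\alpha),(y_\beta)\subseteq\ell_1$ are nets weak-star converging to $z_1$ and $z_2$ respectively (the limit in the second variable taken first). *)

theory Defs
  imports "HOL-Analysis.Analysis"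
begin

definition l1 :: "(nat \<Rightarrow> real) set" where
  "l1 = {x. summable (\<lambda>n. \<bar>x n\<bar>)}"

definition linf :: "(nat \<Rightarrow> real) set" where
  "linf = {a. bounded (range a)}"

definition c0 :: "(nat \<Rightarrow> real) set" where
  "c0 = {a. a \<longlonglongrightarrow> 0}"

definition l1_norm :: "(nat \<Rightarrow> real) \<Rightarrow> real" where
  "l1_norm x = (\<Sum>n. \<bar>x n\<bar>)"

definition linf_norm :: "(nat \<Rightarrow> real) \<Rightarrow> real" where
  "linf_norm a = (SUP n. \<bar>a n\<bar>)"

text \<open>Duality pairing of x in l1 with c in linf; this is also the canonical
  embedding of l1 into l1'' = linf'.\<close>
definition pairing :: "(nat \<Rightarrow> real) \<Rightarrow> (nat \<Rightarrow> real) \<Rightarrow> real" where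
  "pairing x c = (\<Sum>n. x n * c n)"

text \<open>The bidual l1'' = linf' : continuous linear functionals on linf
  (only their values on linf matter).\<close>
definition bidual :: "((nat \<Rightarrow> real) \<Rightarrow> real) set" where
  "bidual = {z. (\<forall>a\<in>linf. \<forall>b\<in>linf. z (\<lambda>n. a n + b n) = z a + z b)
               \<and> (\<forall>r. \<forall>a\<in>linf. z (\<lambda>n. r * a n) = r * z a)
               \<and> (\<exists>C. \<forall>a\<in>linf. \<bar>z a\<bar> \<le> C * linf_norm a)}"

definition c0_perp :: "((nat \<Rightarrow> real) \<Rightarrow> real) set" where
  "c0_perp = {z\<in>bidual. \<forall>a\<in>c0. z a = 0}"

definition cont_sym_bilinear_l1 :: "((nat \<Rightarrow> real) \<Rightarrow> (nat \<Rightarrow> real) \<Rightarrow> real) \<Rightarrow> bool" where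
  "cont_sym_bilinear_l1 B \<longleftrightarrow>
     (\<forall>x\<in>l1. \<forall>x'\<in>l1. \<forall>y\<in>l1. B (\<lambda>n. x n + x' n) y = B x y + B x' y)
   \<and> (\<forall>r. \<forall>x\<in>l1. \<forall>y\<in>l1. B (\<lambda>n. r * x n) y = r * B x y)
   \<and> (\<forall>x\<in>l1. \<forall>y\<in>l1. \<forall>y'\<in>l1. B x (\<lambda>n. y n + y' n) = B x y + B x y')
   \<and> (\<forall>r. \<forall>x\<in>l1. \<forall>y\<in>l1. B x (\<lambda>n. r * y n) = r * B x y)
   \<and> (\<forall>x\<in>l1. \<forall>y\<in>l1. B x y = B y x)
   \<and> (\<exists>C. \<forall>x\<in>l1. \<forall>y\<in>l1. \<bar>B x y\<bar> \<le> C * l1_norm x * l1_norm y)"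

text \<open>A net in l1 is represented by the (proper) filter it generates on l1:
  F is a net in l1 weak-star converging to z in l1''.\<close>
definition wstar_net :: "(nat \<Rightarrow> real) filter \<Rightarrow> ((nat \<Rightarrow> real) \<Rightarrow> real) \<Rightarrow> bool" where
  "wstar_net F z \<longleftrightarrow> F \<noteq> bot \<and> eventually (\<lambda>x. x \<in> l1) F
     \<and> (\<forall>c\<in>linf. ((\<lambda>x. pairing x c) \<longlongrightarrow> z c) F)"

text \<open>Aron--Berner extension: the value of the canonical extension of B at
  (z1,z2) is v, i.e. for all nets x_alpha -> z1, y_beta -> z2 (weak-star) in l1,
  lim_alpha lim_beta B(x_alpha, y_beta) exists and equals v
  (the limit in the second variable being taken first).\<close>
definition AB_ext_value ::
  "((nat \<Rightarrow> real) \<Rightarrow> (nat \<Rightarrow> real) \<Rightarrow> real) \<Rightarrow> ((nat \<Rightarrow> real) \<Rightarrow> real)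
     \<Rightarrow> ((nat \<Rightarrow> real) \<Rightarrow> real) \<Rightarrow> real \<Rightarrow> bool" where
  "AB_ext_value B z1 z2 v \<longleftrightarrow>
     (\<forall>F G. wstar_net F z1 \<longrightarrow> wstar_net G z2 \<longrightarrow>
        (\<exists>g. (\<forall>x\<in>l1. ((\<lambda>y. B x y) \<longlongrightarrow> g x) G) \<and> (g \<longlongrightarrow> v) F))"

end

theory Submission
  imports Defs
begin

lemma l1_bridge:
  fixes f :: "nat \<Rightarrow> real"
  assumes "summable (\<lambda>n. \<bar>f n\<bar>)"
  shows "f summable_on UNIV" "infsum f UNIV = suminf f"
proof -
  have s: "summable (\<lambda>n. norm (f n))" using assms by simp
  have "summable f" using summable_norm_cancel[OF s] .
  then have "(f has_sum suminf f) UNIV"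
    using norm_summable_imp_has_sum[OF s] summable_sums by blast
  then show "f summable_on UNIV" "infsum f UNIV = suminf f"
    by (auto simp: summable_on_def infsumI)
qed

lemma prod_summable:
  assumes "x \<in> l1" "y \<in> l1"
  shows "(\<lambda>(m,n). \<bar>x m\<bar> * \<bar>y n\<bar>) summable_on UNIV"
    "infsum (\<lambda>(m,n). \<bar>x m\<bar> * \<bar>y n\<bar>) UNIV = l1_norm x * l1_norm y"
proof -
  have sx: "summable (\<lambda>n. \<bar>\<bar>x n\<bar>\<bar>)" and sy: "summable (\<lambda>n. \<bar>\<bar>y n\<bar>\<bar>)"
    using assms by (auto simp: l1_def)
  note bx = l1_bridge[OF sx] and by' = l1_bridge[OF sy]
  have inner: "\<And>m. (\<lambda>n. \<bar>x m\<bar> * \<bar>y n\<bar>) summable_on UNIV"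
    using by'(1) by (rule summable_on_cmult_right)
  have inner_val: "\<And>m. infsum (\<lambda>n. \<bar>x m\<bar> * \<bar>y n\<bar>) UNIV = \<bar>x m\<bar> * l1_norm y"
    using by' by (simp add: infsum_cmult_right' l1_norm_def)
  have ny: "l1_norm y \<ge> 0" using sy unfolding l1_norm_def by (simp add: suminf_nonneg)
  have h2: "(\<lambda>m. \<bar>x m\<bar> * l1_norm y) summable_on UNIV"
      using bx(1) by (rule summable_on_cmult_left)
  have c1: "\<forall>m\<in>UNIV. (\<lambda>n. norm ((\<lambda>(m,n). \<bar>x m\<bar> * \<bar>y n\<bar>) (m,n))) summable_on UNIV"
  proof
    fix m :: nat
    have e: "(\<lambda>n. norm ((\<lambda>(m,n). \<bar>x m\<bar> * \<bar>y n\<bar>) (m,n))) = (\<lambda>n. \<bar>x m\<bar> * \<bar>y n\<bar>)"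
      by (rule ext) (simp only: prod.case real_norm_def abs_mult abs_abs)
    show "(\<lambda>n. norm ((\<lambda>(m,n). \<bar>x m\<bar> * \<bar>y n\<bar>) (m,n))) summable_on UNIV"
      unfolding e by (rule inner)
  qed
  have c2: "(\<lambda>m. norm (infsum (\<lambda>n. norm ((\<lambda>(m,n). \<bar>x m\<bar> * \<bar>y n\<bar>) (m,n))) UNIV)) summable_on UNIV"
  proof -
    have e: "(\<lambda>m. norm (infsum (\<lambda>n. norm ((\<lambda>(m,n). \<bar>x m\<bar> * \<bar>y n\<bar>) (m,n))) UNIV))
       = (\<lambda>m. \<bar>x m\<bar> * l1_norm y)"
    proof (rule ext)
      fix m
      have e2: "(\<lambda>n. norm ((\<lambda>(m,n). \<bar>x m\<bar> * \<bar>y n\<bar>) (m,n))) = (\<lambda>n. \<bar>x m\<bar> * \<bar>y n\<bar>)"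
        by (rule ext) (simp only: prod.case real_norm_def abs_mult abs_abs)
      have e3: "(\<lambda>n. \<bar>\<bar>x m\<bar> * \<bar>y n\<bar>\<bar>) = (\<lambda>n. \<bar>x m\<bar> * \<bar>y n\<bar>)"
        by (rule ext) (simp only: abs_mult abs_abs)
      have "\<bar>\<bar>x m\<bar> * l1_norm y\<bar> = \<bar>x m\<bar> * l1_norm y" using ny by (simp only: abs_mult abs_abs abs_of_nonneg)
      then show "norm (infsum (\<lambda>n. norm ((\<lambda>(m,n). \<bar>x m\<bar> * \<bar>y n\<bar>) (m,n))) UNIV) = \<bar>x m\<bar> * l1_norm y"
        unfolding real_norm_def prod.case e3 inner_val .
    qed
    show ?thesis unfolding e by (rule h2)
  qed
  have "(\<lambda>z. norm ((\<lambda>(m,n). \<bar>x m\<bar> * \<bar>y n\<bar>) z)) summable_on Sigma UNIV (\<lambda>_. UNIV)"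
    using Infinite_Sum.abs_summable_on_Sigma_iff[of "\<lambda>(m,n). \<bar>x m\<bar> * \<bar>y n\<bar>" UNIV "\<lambda>_. UNIV"] 
    by (rule iffD2) (rule conjI[OF c1 c2])
  then have "(\<lambda>(m,n). \<bar>x m\<bar> * \<bar>y n\<bar>) summable_on Sigma UNIV (\<lambda>_. UNIV)"
    by (rule abs_summable_summable)
  then show S: "(\<lambda>(m,n). \<bar>x m\<bar> * \<bar>y n\<bar>) summable_on UNIV"
    by simp
  have "infsum (\<lambda>(m,n). \<bar>x m\<bar> * \<bar>y n\<bar>) UNIV
      = infsum (\<lambda>m. infsum (\<lambda>n. \<bar>x m\<bar> * \<bar>y n\<bar>) UNIV) UNIV"
    using infsum_Sigma_banach[of "\<lambda>(m,n). \<bar>x m\<bar> * \<bar>y n\<bar>" UNIV "\<lambda>_. UNIV"] S by simp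
  also have "\<dots> = infsum (\<lambda>m. \<bar>x m\<bar> * l1_norm y) UNIV" using inner_val by simp
  also have "\<dots> = l1_norm x * l1_norm y"
    using bx by (simp add: infsum_cmult_left' l1_norm_def)
  finally show "infsum (\<lambda>(m,n). \<bar>x m\<bar> * \<bar>y n\<bar>) UNIV = l1_norm x * l1_norm y" .
qed


lemma dom:
  fixes w g :: "'a \<Rightarrow> real"
  assumes "g summable_on A" "\<And>z. z \<in> A \<Longrightarrow> \<bar>w z\<bar> \<le> g z"
  shows "w summable_on A" "\<bar>infsum w A\<bar> \<le> infsum g A"
proof -
  have n: "(\<lambda>z. norm (w z)) summable_on A"
    using Infinite_Sum.abs_summable_on_comparison_test'[OF assms(1), of w] assms(2) by simp
  then show "w summable_on A" by (rule abs_summable_summable)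
  have "\<bar>infsum w A\<bar> \<le> infsum (\<lambda>z. norm (w z)) A"
    using norm_infsum_bound[OF n] by simp
  also have "\<dots> \<le> infsum g A"
    using n assms by (intro infsum_mono) auto
  finally show "\<bar>infsum w A\<bar> \<le> infsum g A" .
qed

definition Kf :: "(nat \<Rightarrow> real) \<Rightarrow> (nat \<Rightarrow> real) \<Rightarrow> nat \<Rightarrow> nat \<Rightarrow> real" where
  "Kf a b m n = (if m < n then a m * b n else if n < m then a n * b m else 0)"

definition Bf :: "(nat \<Rightarrow> real) \<Rightarrow> (nat \<Rightarrow> real) \<Rightarrow> (nat \<Rightarrow> real) \<Rightarrow> (nat \<Rightarrow> real) \<Rightarrow> real" where
  "Bf a b x y = infsum (\<lambda>(m,n). Kf a b m n * x m * y n) UNIV"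

definition cf :: "(nat \<Rightarrow> real) \<Rightarrow> (nat \<Rightarrow> real) \<Rightarrow> (nat \<Rightarrow> real) \<Rightarrow> nat \<Rightarrow> real" where
  "cf a b x n = infsum (\<lambda>m. Kf a b m n * x m) UNIV"

lemma Kf_sym: "Kf a b m n = Kf a b n m"
  by (auto simp: Kf_def)

lemma Kf_bound:
  assumes "\<And>i. \<bar>a i\<bar> \<le> M" "\<And>i. \<bar>b i\<bar> \<le> M"
  shows "\<bar>Kf a b m n\<bar> \<le> M * M"
proof -
  have M: "0 \<le> M" using assms(1)[of 0] abs_ge_zero[of "a 0"] by linarith
  have "\<bar>a i * b j\<bar> \<le> M * M" for i j
    unfolding abs_mult using assms M by (intro mult_mono) auto
  then show ?thesis using M by (auto simp: Kf_def)
qed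

lemma l1_norm_nonneg: "x \<in> l1 \<Longrightarrow> l1_norm x \<ge> 0"
  unfolding l1_norm_def l1_def by (simp add: suminf_nonneg)

context
  fixes a b :: "nat \<Rightarrow> real" and M :: real
  assumes ba: "\<And>i. \<bar>a i\<bar> \<le> M" and bb: "\<And>i. \<bar>b i\<bar> \<le> M"
begin

lemma Kb: "\<bar>Kf a b m n\<bar> \<le> M * M"
  by (rule Kf_bound[OF ba bb])

lemma M_nonneg: "0 \<le> M" using ba[of 0] abs_ge_zero[of "a 0"] by linarith

lemma term_summable:
  assumes "x \<in> l1" "y \<in> l1"
  shows "(\<lambda>(m,n). Kf a b m n * x m * y n) summable_on UNIV"
    "\<bar>Bf a b x y\<bar> \<le> M * M * (l1_norm x * l1_norm y)"
proof -
  have g: "(\<lambda>p. M * M * (case p of (m,n) \<Rightarrow> \<bar>x m\<bar> * \<bar>y n\<bar>)) summable_on UNIV"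
    using prod_summable(1)[OF assms] by (rule summable_on_cmult_right)
  have le: "\<bar>(case p of (m,n) \<Rightarrow> Kf a b m n * x m * y n)\<bar>
       \<le> M * M * (case p of (m,n) \<Rightarrow> \<bar>x m\<bar> * \<bar>y n\<bar>)" for p
  proof (cases p)
    case (Pair m n)
    have "\<bar>Kf a b m n * x m * y n\<bar> = \<bar>Kf a b m n\<bar> * (\<bar>x m\<bar> * \<bar>y n\<bar>)"
      by (simp add: abs_mult)
    also have "\<dots> \<le> M * M * (\<bar>x m\<bar> * \<bar>y n\<bar>)"
      by (intro mult_right_mono Kf_bound ba bb) simp
    finally show ?thesis using Pair by simp
  qed
  note D = dom[OF g, of "\<lambda>(m,n). Kf a b m n * x m * y n"]
  show "(\<lambda>(m,n). Kf a b m n * x m * y n) summable_on UNIV" using D le by blast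
  have "\<bar>Bf a b x y\<bar> \<le> infsum (\<lambda>p. M * M * (case p of (m,n) \<Rightarrow> \<bar>x m\<bar> * \<bar>y n\<bar>)) UNIV"
    using D le unfolding Bf_def by blast
  also have "\<dots> = M * M * (l1_norm x * l1_norm y)"
    by (simp add: infsum_cmult_right' prod_summable(2)[OF assms])
  finally show "\<bar>Bf a b x y\<bar> \<le> M * M * (l1_norm x * l1_norm y)" .
qed


lemma Bf_add1:
  assumes "x \<in> l1" "x' \<in> l1" "y \<in> l1"
  shows "Bf a b (\<lambda>n. x n + x' n) y = Bf a b x y + Bf a b x' y"
proof -
  have e: "(\<lambda>(m,n). Kf a b m n * (x m + x' m) * y n)
    = (\<lambda>p. (\<lambda>(m,n). Kf a b m n * x m * y n) p + (\<lambda>(m,n). Kf a b m n * x' m * y n) p)"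
    by (auto simp: algebra_simps)
  show ?thesis unfolding Bf_def e
    by (rule infsum_add[OF term_summable(1)[OF assms(1,3)] term_summable(1)[OF assms(2,3)]])
qed

lemma Bf_add2:
  assumes "x \<in> l1" "y \<in> l1" "y' \<in> l1"
  shows "Bf a b x (\<lambda>n. y n + y' n) = Bf a b x y + Bf a b x y'"
proof -
  have e: "(\<lambda>(m,n). Kf a b m n * x m * (y n + y' n))
    = (\<lambda>p. (\<lambda>(m,n). Kf a b m n * x m * y n) p + (\<lambda>(m,n). Kf a b m n * x m * y' n) p)"
    by (auto simp: algebra_simps)
  show ?thesis unfolding Bf_def e
    by (rule infsum_add[OF term_summable(1)[OF assms(1,2)] term_summable(1)[OF assms(1,3)]])
qed

lemma Bf_smult1: "Bf a b (\<lambda>n. r * x n) y = r * Bf a b x y"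
proof -
  have e: "(\<lambda>(m,n). Kf a b m n * (r * x m) * y n) = (\<lambda>p. r * (\<lambda>(m,n). Kf a b m n * x m * y n) p)"
    by (auto simp: algebra_simps)
  show ?thesis unfolding Bf_def e by (rule infsum_cmult_right')
qed

lemma Bf_smult2: "Bf a b x (\<lambda>n. r * y n) = r * Bf a b x y"
proof -
  have e: "(\<lambda>(m,n). Kf a b m n * x m * (r * y n)) = (\<lambda>p. r * (\<lambda>(m,n). Kf a b m n * x m * y n) p)"
    by (auto simp: algebra_simps)
  show ?thesis unfolding Bf_def e by (rule infsum_cmult_right')
qed

lemma Bf_sym: "Bf a b x y = Bf a b y x"
proof -
  have bij: "bij_betw prod.swap (UNIV :: (nat \<times> nat) set) UNIV"
    by (simp add: bij_betw_def)
  have "Bf a b y x = infsum (\<lambda>p. (\<lambda>(m,n). Kf a b m n * y m * x n) (prod.swap p)) UNIV"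
    unfolding Bf_def by (rule infsum_reindex_bij_betw[OF bij, symmetric])
  also have "(\<lambda>p. (\<lambda>(m,n). Kf a b m n * y m * x n) (prod.swap p)) = (\<lambda>(m,n). Kf a b m n * x m * y n)"
    by (auto simp: Kf_sym[of a b] algebra_simps)
  finally show ?thesis unfolding Bf_def by simp
qed


lemma cf_props:
  assumes "x \<in> l1"
  shows "(\<lambda>m. Kf a b m n * x m) summable_on UNIV" "\<bar>cf a b x n\<bar> \<le> M * M * l1_norm x"
proof -
  have sx: "summable (\<lambda>n. \<bar>\<bar>x n\<bar>\<bar>)" using assms by (auto simp: l1_def)
  note bx = l1_bridge[OF sx]
  have g: "(\<lambda>m. M * M * \<bar>x m\<bar>) summable_on UNIV"
    using bx(1) by (rule summable_on_cmult_right)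
  have le: "\<bar>Kf a b m n * x m\<bar> \<le> M * M * \<bar>x m\<bar>" for m
    unfolding abs_mult by (intro mult_right_mono Kf_bound ba bb) simp
  note D = dom[OF g, of "\<lambda>m. Kf a b m n * x m"]
  show "(\<lambda>m. Kf a b m n * x m) summable_on UNIV" using D le by blast
  have "\<bar>cf a b x n\<bar> \<le> infsum (\<lambda>m. M * M * \<bar>x m\<bar>) UNIV"
    using D le unfolding cf_def by blast
  also have "\<dots> = M * M * l1_norm x"
    using bx by (simp add: infsum_cmult_right' l1_norm_def)
  finally show "\<bar>cf a b x n\<bar> \<le> M * M * l1_norm x" .
qed

lemma Bf_eq:
  assumes "x \<in> l1" "y \<in> l1"
  shows "Bf a b x y = pairing y (cf a b x)"
proof -
  have S: "(\<lambda>(m,n). Kf a b m n * x m * y n) summable_on UNIV \<times> UNIV"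
    using term_summable(1)[OF assms] by simp
  have "Bf a b x y = infsum (\<lambda>m. infsum (\<lambda>n. Kf a b m n * x m * y n) UNIV) UNIV"
    unfolding Bf_def
    using infsum_Sigma_banach[of "\<lambda>(m,n). Kf a b m n * x m * y n" UNIV "\<lambda>_. UNIV"] S by simp
  also have "\<dots> = infsum (\<lambda>n. infsum (\<lambda>m. Kf a b m n * x m * y n) UNIV) UNIV"
    by (rule infsum_swap_banach[OF S])
  also have "\<dots> = infsum (\<lambda>n. y n * cf a b x n) UNIV"
    unfolding cf_def infsum_cmult_right'[symmetric] by (simp add: mult_ac)
  also have "\<dots> = suminf (\<lambda>n. y n * cf a b x n)"
  proof (rule l1_bridge(2))
    have sy: "summable (\<lambda>n. \<bar>y n\<bar>)" using assms by (auto simp: l1_def)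
    have "summable (\<lambda>n. \<bar>y n\<bar> * (M * M * l1_norm x))"
      using sy by (rule summable_mult2)
    then show "summable (\<lambda>n. \<bar>y n * cf a b x n\<bar>)"
      by (rule summable_comparison_test'[where N=0])
         (auto simp: abs_mult intro!: mult_left_mono cf_props(2)[OF assms(1)])
  qed
  finally show ?thesis unfolding pairing_def .
qed


lemma cf_decomp:
  assumes "x \<in> l1"
  shows "(\<lambda>n. cf a b x n - pairing x a * b n) \<longlonglongrightarrow> 0"
proof -
  have M: "0 \<le> M" by (rule M_nonneg)
  have sx: "summable (\<lambda>n. \<bar>x n\<bar>)" using assms by (auto simp: l1_def)
  have sx': "summable (\<lambda>n. \<bar>\<bar>x n\<bar>\<bar>)" using sx by simp
  note bx = l1_bridge[OF sx']
  have g0: "(\<lambda>m. 2 * M * M * \<bar>x m\<bar>) summable_on UNIV"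
    using bx(1) by (rule summable_on_cmult_right)
  have sxa: "summable (\<lambda>m. \<bar>x m * a m\<bar>)"
    by (rule summable_comparison_test'[where N=0, OF summable_mult2[OF sx, of M]])
       (auto simp: abs_mult intro!: mult_left_mono ba)
  note bxa = l1_bridge[OF sxa]
  define A where "A = pairing x a"
  have A: "A = infsum (\<lambda>m. x m * a m) UNIV" unfolding A_def pairing_def using bxa(2) by simp
  define T where "T n = 2*M*M * l1_norm x + (\<Sum>m<n. 0 - 2*M*M*\<bar>x m\<bar>)" for n
  have T0: "T \<longlonglongrightarrow> 0"
  proof -
    have "(\<lambda>n. \<Sum>m<n. \<bar>x m\<bar>) \<longlonglongrightarrow> l1_norm x"
      unfolding l1_norm_def by (rule summable_LIMSEQ[OF sx])
    then have "(\<lambda>n. 2*M*M * l1_norm x - 2*M*M * (\<Sum>m<n. \<bar>x m\<bar>)) \<longlonglongrightarrow> 2*M*M * l1_norm x - 2*M*M * l1_norm x"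
      by (intro tendsto_intros)
    moreover have "T = (\<lambda>n. 2*M*M * l1_norm x - 2*M*M * (\<Sum>m<n. \<bar>x m\<bar>))"
      unfolding T_def by (rule ext) (simp add: sum_distrib_left sum_negf)
    ultimately show ?thesis by simp
  qed
  have bound: "\<bar>cf a b x n - A * b n\<bar> \<le> T n" for n
  proof -
    define g where "g m = (if m < n then 0 else 2*M*M*\<bar>x m\<bar>)" for m
    have g: "g summable_on UNIV"
      by (rule dom(1)[OF g0]) (auto simp: g_def M)
    have gs: "summable (\<lambda>m. \<bar>g m\<bar>)"
      by (rule summable_comparison_test'[where N=0, OF summable_mult2[OF sx, of "2*M*M"]])
         (auto simp: g_def M mult_ac)
    have "(\<lambda>m. if m \<in> {..<n} then 0 else 2*M*M*\<bar>x m\<bar>) sums T n"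
      unfolding T_def
      by (rule sums_If_finite_set') (use sums_mult[OF summable_sums[OF sx], of "2*M*M"] in \<open>auto simp: l1_norm_def\<close>)
    then have gT: "infsum g UNIV = T n"
      using l1_bridge(2)[OF gs] by (simp add: g_def[abs_def] sums_iff)
    define D where "D m = (Kf a b m n - a m * b n) * x m" for m
    have Dle: "\<bar>D m\<bar> \<le> g m" for m
    proof (cases "m < n")
      case True then show ?thesis by (simp add: D_def g_def Kf_def)
    next
      case False
      have "\<bar>Kf a b m n - a m * b n\<bar> \<le> \<bar>Kf a b m n\<bar> + \<bar>a m * b n\<bar>" by (rule abs_triangle_ineq4)
      also have "\<dots> \<le> M * M + M * M"
        using Kb[of m n] mult_mono[OF ba[of m] bb[of n] M abs_ge_zero] M by (simp add: abs_mult)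
      finally have "\<bar>D m\<bar> \<le> (M*M + M*M) * \<bar>x m\<bar>"
        unfolding D_def abs_mult by (rule mult_right_mono) simp
      then show ?thesis using False by (simp add: g_def algebra_simps)
    qed
    note DD = dom[OF g, of D]
    have s2: "(\<lambda>m. b n * (x m * a m)) summable_on UNIV"
      using bxa(1) by (rule summable_on_cmult_right)
    have "cf a b x n = infsum (\<lambda>m. D m + b n * (x m * a m)) UNIV"
      unfolding cf_def D_def by (rule infsum_cong) (simp add: algebra_simps)
    also have "\<dots> = infsum D UNIV + b n * A"
      using infsum_add[OF DD(1) s2] Dle by (simp add: infsum_cmult_right' A)
    finally have "cf a b x n - A * b n = infsum D UNIV" by simp
    then show ?thesis using DD(2) Dle gT by simp
  qed
  show ?thesis
    unfolding A_def[symmetric]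
    by (rule Lim_null_comparison[OF _ T0]) (simp add: bound)
qed

end


lemma linf_boundI: "(\<And>n. \<bar>f n\<bar> \<le> K) \<Longrightarrow> f \<in> linf"
  unfolding linf_def bounded_iff by auto

theorem lemma2p3:
  fixes a b :: "nat \<Rightarrow> real"
  assumes "a \<in> linf" and "b \<in> linf"
  shows "\<exists>B. cont_sym_bilinear_l1 B \<and>
           (\<forall>z1\<in>bidual. \<forall>z2\<in>c0_perp. AB_ext_value B z1 z2 (z1 a * z2 b))"
proof -
  obtain Ma where Ma: "\<And>n. \<bar>a n\<bar> \<le> Ma"
    using assms(1) unfolding linf_def bounded_iff by auto
  obtain Mb where Mb: "\<And>n. \<bar>b n\<bar> \<le> Mb"
    using assms(2) unfolding linf_def bounded_iff by auto
  define M where "M = max Ma Mb"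
  have ba: "\<And>n. \<bar>a n\<bar> \<le> M" using Ma unfolding M_def by (meson max.coboundedI1)
  have bb: "\<And>n. \<bar>b n\<bar> \<le> M" using Mb unfolding M_def by (meson max.coboundedI2)
  have cont: "cont_sym_bilinear_l1 (Bf a b)"
    unfolding cont_sym_bilinear_l1_def
  proof (intro conjI ballI allI)
    show "Bf a b (\<lambda>n. x n + x' n) y = Bf a b x y + Bf a b x' y" if "x \<in> l1" "x' \<in> l1" "y \<in> l1" for x x' y
      by (rule Bf_add1[OF ba bb that])
    show "Bf a b x (\<lambda>n. y n + y' n) = Bf a b x y + Bf a b x y'" if "x \<in> l1" "y \<in> l1" "y' \<in> l1" for x y y'
      by (rule Bf_add2[OF ba bb that])
    show "Bf a b (\<lambda>n. r * x n) y = r * Bf a b x y" for r x y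
      by (rule Bf_smult1[OF ba bb])
    show "Bf a b x (\<lambda>n. r * y n) = r * Bf a b x y" for r x y
      by (rule Bf_smult2[OF ba bb])
    show "Bf a b x y = Bf a b y x" for x y
      by (rule Bf_sym[OF ba bb])
    show "\<exists>C. \<forall>x\<in>l1. \<forall>y\<in>l1. \<bar>Bf a b x y\<bar> \<le> C * l1_norm x * l1_norm y"
      using term_summable(2)[OF ba bb] by (intro exI[of _ "M * M"]) (simp add: mult_ac)
  qed
  have ext: "AB_ext_value (Bf a b) z1 z2 (z1 a * z2 b)" if z1: "z1 \<in> bidual" and z2: "z2 \<in> c0_perp" for z1 z2
    unfolding AB_ext_value_def
  proof (intro allI impI)
    fix F G assume F: "wstar_net F z1" and G: "wstar_net G z2"
    have z2b: "z2 \<in> bidual" and z2c0: "\<And>c. c \<in> c0 \<Longrightarrow> z2 c = 0" using z2 unfolding c0_perp_def by blast+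
    have lim: "((\<lambda>y. Bf a b x y) \<longlongrightarrow> pairing x a * z2 b) G" if x: "x \<in> l1" for x
    proof -
      define c where "c = cf a b x"
      define r where "r = pairing x a"
      have cl: "c \<in> linf" unfolding c_def by (rule linf_boundI, rule cf_props(2)[OF ba bb x])
      have rb: "(\<lambda>n. r * b n) \<in> linf"
        by (rule linf_boundI[of _ "\<bar>r\<bar> * M"]) (simp add: abs_mult mult_left_mono bb)
      define d where "d n = c n - r * b n" for n
      have dc0: "d \<longlonglongrightarrow> 0" unfolding d_def c_def r_def by (rule cf_decomp[OF ba bb x])
      then have "Bseq d" by (rule convergent_imp_Bseq[OF convergentI])
      then have "d \<in> linf"
        unfolding linf_def using Elementary_Normed_Spaces.Bseq_eq_bounded by blast
      have ce: "c = (\<lambda>n. r * b n + d n)" by (auto simp: d_def)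
      have "z2 c = z2 (\<lambda>n. r * b n) + z2 d"
      proof -
        have "\<forall>u\<in>linf. \<forall>v\<in>linf. z2 (\<lambda>n. u n + v n) = z2 u + z2 v"
          using z2b unfolding bidual_def by blast
        from this[rule_format, OF rb \<open>d \<in> linf\<close>] show ?thesis unfolding ce by simp
      qed
      also have "z2 (\<lambda>n. r * b n) = r * z2 b"
      proof -
        have "\<forall>s. \<forall>u\<in>linf. z2 (\<lambda>n. s * u n) = s * z2 u" using z2b unfolding bidual_def by blast
        from this[rule_format, OF assms(2)] show ?thesis .
      qed
      also have "z2 d = 0" using z2c0[of d] dc0 unfolding c0_def by blast
      finally have zc: "z2 c = r * z2 b" by simp
      have t: "((\<lambda>y. pairing y c) \<longlongrightarrow> z2 c) G" using G cl unfolding wstar_net_def by blast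
      have ev1: "eventually (\<lambda>y. y \<in> l1) G" using G unfolding wstar_net_def by blast
      have ev: "eventually (\<lambda>y. pairing y c = Bf a b x y) G"
        using ev1 by (rule eventually_mono) (simp add: c_def Bf_eq[OF ba bb x])
      have "((\<lambda>y. Bf a b x y) \<longlongrightarrow> z2 c) G" by (rule Lim_transform_eventually[OF t ev])
      then show ?thesis using zc unfolding r_def by simp
    qed
    have "((\<lambda>x. pairing x a) \<longlongrightarrow> z1 a) F"
      using F assms(1) unfolding wstar_net_def by blast
    then have "((\<lambda>x. pairing x a * z2 b) \<longlongrightarrow> z1 a * z2 b) F"
      by (rule tendsto_mult_right)
    then show "\<exists>g. (\<forall>x\<in>l1. ((\<lambda>y. Bf a b x y) \<longlongrightarrow> g x) G) \<and> (g \<longlongrightarrow> z1 a * z2 b) F"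
      using lim by (intro exI[of _ "\<lambda>x. pairing x a * z2 b"] conjI ballI) simp_all
  qed
  show ?thesis using cont ext by blast
qed

end
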